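(* Let $q\ge 2$, $n$, $r\ge 1$, $\rho\ge 2$ and $d\ge 1$ be integers, and put $N=r+\rho-1$. Let $B(l,\rho)$, $l=0,1,2,\dots$, be a function with the following properties: (i) for every $l$, every $q$-ary code of length $l$ with minimum Hamming distance at least $\rho$ has at most $B(l,\rho)$ codewords; (ii) $B(0,\rho)=1$; (iii) $B(\cdot,\rho)$ is log-convex in $l$. Let $\mathcal{C}$ be a $q$-ary $(n,k,r,\rho)$ LRC code with minimum distance $d$, and let $$\mu=\mu(n,d,r,\rho):=\Big\lceil \frac{n-(d-1)}{N}\Big\rceil+1 .$$ Then $$k\le \mu\,\log_q B(N,\rho).$$
   Context: A $q$-ary code of length $n$ is a subset $\mathcal{C}\subseteq Q^n$ of a set $Q$ with $|Q|=q$; its minimum distance is the minimum Hamming distance between distinct codewords, and its dimension is $k=\log_q|\mathcal{C}|$ (not necessarily an integer). For $I\subseteq[n]=\{1,\dots,n\}$, $\mathcal{C}_I$ denotes the restriction (projection) of $\mathcal{C}$ to the coordinates in $I$. The code $\mathcal{C}$ of cardinality $q^k$ is an $(n,k,r,\rho)$ LRC code (has the $(\rho,r)$ locality property), $\rho\ge 2$, if every coordinate $i\in[n]$ is contained in a subset $\mathcal{R}_i\subseteq[n]$ of size at most $r+\rho-1$ such that the restricted code $\mathcal{C}_{\mathcal{R}_i}$ has minimum distance at least $\rho$. A positive function $f(j)$ of an integer argument is log-convex if $f(j_1)f(j_2)\le f(j_1-1)f(j_2+1)$ for all $j_1\le j_2$ in the support of $f$. *)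

theory Defs
  imports Complex_Main "HOL-Library.FuncSet"
begin

text \<open>Words of length n over alphabet Q are functions on the coordinate set {1..n}
  (extensional: undefined outside). A q-ary code of length n over Q is a subset of
  words of length n over Q.\<close>

definition is_code :: "'a set \<Rightarrow> nat \<Rightarrow> (nat \<Rightarrow> 'a) set \<Rightarrow> bool" where
  "is_code Q n C \<longleftrightarrow> C \<subseteq> PiE {1..n} (\<lambda>_. Q)"

definition hamming :: "nat set \<Rightarrow> (nat \<Rightarrow> 'a) \<Rightarrow> (nat \<Rightarrow> 'a) \<Rightarrow> nat" where
  "hamming I x y = card {i \<in> I. x i \<noteq> y i}"

definition proj :: "(nat \<Rightarrow> 'a) set \<Rightarrow> nat set \<Rightarrow> (nat \<Rightarrow> 'a) set" where
  "proj C I = (\<lambda>x. restrict x I) ` C"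

definition min_dist_ge :: "nat set \<Rightarrow> (nat \<Rightarrow> 'a) set \<Rightarrow> nat \<Rightarrow> bool" where
  "min_dist_ge I C \<rho> \<longleftrightarrow> (\<forall>x\<in>C. \<forall>y\<in>C. x \<noteq> y \<longrightarrow> hamming I x y \<ge> \<rho>)"

definition min_dist_eq :: "nat set \<Rightarrow> (nat \<Rightarrow> 'a) set \<Rightarrow> nat \<Rightarrow> bool" where
  "min_dist_eq I C d \<longleftrightarrow> min_dist_ge I C d \<and>
     (\<exists>x\<in>C. \<exists>y\<in>C. x \<noteq> y \<and> hamming I x y = d)"

definition has_locality :: "nat \<Rightarrow> (nat \<Rightarrow> 'a) set \<Rightarrow> nat \<Rightarrow> nat \<Rightarrow> bool" where
  "has_locality n C r \<rho> \<longleftrightarrow>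
     (\<forall>i\<in>{1..n}. \<exists>R. R \<subseteq> {1..n} \<and> i \<in> R \<and> card R \<le> r + \<rho> - 1 \<and>
        min_dist_ge R (proj C R) \<rho>)"

definition log_convex :: "(nat \<Rightarrow> real) \<Rightarrow> bool" where
  "log_convex f \<longleftrightarrow> (\<forall>l. f l > 0) \<and>
     (\<forall>j1 j2. 1 \<le> j1 \<longrightarrow> j1 \<le> j2 \<longrightarrow> f j1 * f j2 \<le> f (j1 - 1) * f (j2 + 1))"

end

theory Submission
  imports Defs
begin
lemma relabel:
  fixes Q :: "'a set" and S :: "nat set" and D :: "(nat \<Rightarrow> 'a) set" and B :: "nat \<Rightarrow> real"
  assumes fin: "finite S" and DS: "D \<subseteq> PiE S (\<lambda>_. Q)" and md: "min_dist_ge S D \<rho>"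
    and B_bound: "\<And>l D. is_code Q l D \<Longrightarrow> min_dist_ge {1..l} D \<rho> \<Longrightarrow> real (card D) \<le> B l"
  shows "real (card D) \<le> B (card S)"
proof -
  obtain h where h: "bij_betw h {1..card S} S" using ex_bij_betw_nat_finite_1[OF fin] by blast
  define T where "T = (\<lambda>x::nat\<Rightarrow>'a. restrict (x \<circ> h) {1..card S})"
  have hin: "\<And>j. j \<in> {1..card S} \<Longrightarrow> h j \<in> S" using h by (auto simp: bij_betw_def)
  have inj: "inj_on T D"
  proof
    fix x y assume xy: "x \<in> D" "y \<in> D" "T x = T y"
    show "x = y"
    proof
      fix i show "x i = y i"
      proof (cases "i \<in> S")
        case True
        then obtain j where j: "j \<in> {1..card S}" "h j = i" using h True unfolding bij_betw_def by (metis imageE)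
        have "T x j = T y j" using xy by simp
        then show ?thesis using j by (simp add: T_def)
      next
        case False
        then show ?thesis using xy DS by (metis PiE_E subsetD)
      qed
    qed
  qed
  have code: "is_code Q (card S) (T ` D)"
    unfolding is_code_def using DS hin by (auto simp: T_def PiE_def Pi_def)
  have ham: "hamming {1..card S} (T x) (T y) = hamming S x y" for x y
  proof -
    have "{i \<in> S. x i \<noteq> y i} = h ` {j \<in> {1..card S}. T x j \<noteq> T y j}"
    proof
      show "h ` {j \<in> {1..card S}. T x j \<noteq> T y j} \<subseteq> {i \<in> S. x i \<noteq> y i}"
        using hin by (auto simp: T_def)
      show "{i \<in> S. x i \<noteq> y i} \<subseteq> h ` {j \<in> {1..card S}. T x j \<noteq> T y j}"
      proof
        fix i assume i: "i \<in> {i \<in> S. x i \<noteq> y i}"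
        then obtain j where j: "j \<in> {1..card S}" "h j = i" using h unfolding bij_betw_def by (metis (no_types, lifting) imageE mem_Collect_eq)
        then show "i \<in> h ` {j \<in> {1..card S}. T x j \<noteq> T y j}" using i by (auto simp: T_def)
      qed
    qed
    moreover have "inj_on h {j \<in> {1..card S}. T x j \<noteq> T y j}"
      using h by (auto simp: bij_betw_def intro: inj_on_subset)
    ultimately show ?thesis unfolding hamming_def by (simp add: card_image)
  qed
  have "min_dist_ge {1..card S} (T ` D) \<rho>"
    unfolding min_dist_ge_def
  proof (intro ballI impI)
    fix a b assume "a \<in> T ` D" "b \<in> T ` D" "a \<noteq> b"
    then obtain x y where "x \<in> D" "y \<in> D" "a = T x" "b = T y" "x \<noteq> y" by blast
    then show "\<rho> \<le> hamming {1..card S} a b" using md ham[of x y] unfolding min_dist_ge_def by simp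
  qed
  from B_bound[OF code this] show ?thesis using card_image[OF inj] by simp
qed

lemma lc_bound:
  fixes g :: "nat \<Rightarrow> real"
  assumes g0: "g 0 = 0" and cv: "\<And>j. j \<ge> 1 \<Longrightarrow> 2 * g j \<le> g (j - 1) + g (j + 1)"
  shows "s \<le> N \<Longrightarrow> real N * g s \<le> real s * g N"
proof -
  define \<Delta> where "\<Delta> j = g (Suc j) - g j" for j
  have m1: "\<Delta> j \<le> \<Delta> (Suc j)" for j using cv[of "Suc j"] by (simp add: \<Delta>_def)
  have mono: "i \<le> j \<Longrightarrow> \<Delta> i \<le> \<Delta> j" for i j
    by (induction j rule: dec_induct) (auto intro: order_trans m1)
  have c1: "g s \<le> real s * \<Delta> s" for s
  proof (induction s)
    case 0 then show ?case using g0 by simp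
  next
    case (Suc s)
    have "g (Suc s) = g s + \<Delta> s" by (simp add: \<Delta>_def)
    also have "\<dots> \<le> (real s + 1) * \<Delta> s" using Suc by (simp add: algebra_simps)
    also have "\<dots> \<le> (real s + 1) * \<Delta> (Suc s)" using m1[of s] by (intro mult_left_mono) auto
    finally show ?case by (simp add: add.commute)
  qed
  assume "s \<le> N"
  then show ?thesis
  proof (induction N rule: dec_induct)
    case base then show ?case by simp
  next
    case (step N)
    have "g s \<le> real s * \<Delta> N"
      using c1[of s] mono[OF step(1)] by (meson mult_left_mono of_nat_0_le_iff order_trans)
    then have "real (Suc N) * g s \<le> real s * g N + real s * \<Delta> N" using step(3) by (simp add: algebra_simps)
    also have "\<dots> = real s * g (Suc N)" by (simp add: \<Delta>_def algebra_simps)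
    finally show ?case .
  qed
qed

lemma step_bound:
  fixes Q :: "'a set" and C :: "(nat \<Rightarrow> 'a) set" and B :: "nat \<Rightarrow> real"
  assumes CQ: "C \<subseteq> PiE {1..n} (\<lambda>_. Q)" and finQ: "finite Q"
    and R: "R \<subseteq> {1..n}" and mdR: "min_dist_ge R (proj C R) \<rho>"
    and B_bound: "\<And>l D. is_code Q l D \<Longrightarrow> min_dist_ge {1..l} D \<rho> \<Longrightarrow> real (card D) \<le> B l"
  shows "real (card (proj C (U \<union> R))) \<le> real (card (proj C U)) * B (card (R - U))"
proof -
  define S where "S = R - U"
  have finC: "finite C" using CQ finQ by (meson finite_PiE finite_atLeastAtMost finite_subset)
  define fib where "fib p = (\<lambda>c. restrict c (U \<union> R)) ` {c\<in>C. restrict c U = p}" for p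
  define D where "D p = (\<lambda>c. restrict c S) ` {c\<in>C. restrict c U = p}" for p
  have union: "proj C (U \<union> R) = (\<Union>p\<in>proj C U. fib p)"
    unfolding proj_def fib_def by auto
  have fibD: "card (fib p) \<le> card (D p)" for p
  proof -
    define F where "F z = (\<lambda>i. if i \<in> U then p i else z i)" for z :: "nat \<Rightarrow> 'a"
    have "fib p = F ` D p"
      unfolding fib_def D_def F_def S_def image_image
      by (intro image_cong refl) (auto simp: restrict_def fun_eq_iff, metis)
    moreover have "finite (D p)" using finC unfolding D_def by simp
    ultimately show ?thesis by (simp add: card_image_le)
  qed
  have DB: "real (card (D p)) \<le> B (card S)" for p
  proof (rule relabel[where Q=Q and \<rho>=\<rho>])
    show "finite S" unfolding S_def using R by (meson finite_Diff finite_atLeastAtMost finite_subset)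
    show "D p \<subseteq> PiE S (\<lambda>_. Q)" unfolding D_def using CQ R by (auto simp: PiE_def Pi_def S_def subset_iff)
    show "min_dist_ge S (D p) \<rho>" unfolding min_dist_ge_def
    proof (intro ballI impI)
      fix a b assume "a \<in> D p" "b \<in> D p" "a \<noteq> b"
      then obtain c c' where cc: "c \<in> C" "c' \<in> C" "restrict c U = p" "restrict c' U = p"
        "a = restrict c S" "b = restrict c' S" unfolding D_def by blast
      have agree: "\<And>i. i \<in> U \<Longrightarrow> c i = c' i" using cc(3,4) by (metis restrict_apply')
      have "restrict c R \<noteq> restrict c' R"
        using \<open>a \<noteq> b\<close> cc(5,6) unfolding S_def by (auto simp: fun_eq_iff restrict_def split: if_splits)
      then have "\<rho> \<le> hamming R (restrict c R) (restrict c' R)"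
        using mdR cc(1,2) unfolding min_dist_ge_def proj_def by blast
      also have "hamming R (restrict c R) (restrict c' R) = hamming S a b"
        unfolding hamming_def cc(5,6) S_def using agree by (intro arg_cong[where f=card]) auto
      finally show "\<rho> \<le> hamming S a b" .
    qed
    show "\<And>l D. is_code Q l D \<Longrightarrow> min_dist_ge {1..l} D \<rho> \<Longrightarrow> real (card D) \<le> B l" by (rule B_bound)
  qed
  have finP: "finite (proj C U)" using finC unfolding proj_def by simp
  have "card (proj C (U \<union> R)) \<le> (\<Sum>p\<in>proj C U. card (fib p))"
    unfolding union by (rule card_UN_le[OF finP])
  then have "real (card (proj C (U \<union> R))) \<le> (\<Sum>p\<in>proj C U. real (card (fib p)))"
    by (metis of_nat_le_iff of_nat_sum)
  also have "\<dots> \<le> (\<Sum>p\<in>proj C U. B (card S))"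
    by (intro sum_mono) (meson DB fibD of_nat_le_iff order_trans)
  also have "\<dots> = real (card (proj C U)) * B (card S)" by simp
  finally show ?thesis unfolding S_def .
qed

theorem theorem1:
  fixes Q :: "'a set" and q n r \<rho> d :: nat and B :: "nat \<Rightarrow> real"
    and C :: "(nat \<Rightarrow> 'a) set"
  assumes "q \<ge> 2" and "finite Q" and "card Q = q"
    and "r \<ge> 1" and "\<rho> \<ge> 2" and "d \<ge> 1"
    and B_bound: "\<And>l D. is_code Q l D \<Longrightarrow> min_dist_ge {1..l} D \<rho> \<Longrightarrow> real (card D) \<le> B l"
    and B0: "B 0 = 1"
    and B_lc: "log_convex B"
    and code: "is_code Q n C"
    and loc: "has_locality n C r \<rho>"
    and dist: "min_dist_eq {1..n} C d"
  shows "log q (card C) \<le>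
     real_of_int (\<lceil>(real n - (real d - 1)) / real (r + \<rho> - 1)\<rceil> + 1) * log q (B (r + \<rho> - 1))"
proof -
  define N where "N = r + \<rho> - 1"
  have N2: "N \<ge> 2" using assms(4,5) unfolding N_def by simp
  have q1: "real q > 1" using assms(1) by simp
  have CQ: "C \<subseteq> PiE {1..n} (\<lambda>_. Q)" using code unfolding is_code_def .
  have finC: "finite C" using CQ assms(2) by (meson finite_PiE finite_atLeastAtMost finite_subset)
  obtain c0 c1 where c01: "c0 \<in> C" "c1 \<in> C" "c0 \<noteq> c1" "hamming {1..n} c0 c1 = d"
    using dist unfolding min_dist_eq_def by blast
  have dn: "d \<le> n"
  proof -
    have "hamming {1..n} c0 c1 \<le> card {1..n}" unfolding hamming_def by (intro card_mono) auto
    then show ?thesis using c01(4) by simp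
  qed
  have Qne: "Q \<noteq> {}" using assms(1,3) by auto
  have B1: "B l \<ge> 1" for l
  proof -
    define x0 where "x0 = restrict (\<lambda>_. SOME a. a \<in> Q) {1..l}"
    have "is_code Q l {x0}" unfolding is_code_def x0_def using Qne by (auto simp: some_in_eq)
    moreover have "min_dist_ge {1..l} {x0} \<rho>" unfolding min_dist_ge_def by simp
    ultimately show ?thesis using B_bound by fastforce
  qed
  define g where "g l = log q (B l)" for l
  have Bpos: "B l > 0" for l using B1[of l] by simp
  have g0: "g 0 = 0" unfolding g_def B0 by simp
  have gnn: "g l \<ge> 0" for l unfolding g_def using B1[of l] q1 by simp
  have cv: "2 * g j \<le> g (j - 1) + g (j + 1)" if "j \<ge> 1" for j
  proof -
    have "B j * B j \<le> B (j - 1) * B (j + 1)" using B_lc that unfolding log_convex_def by blast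
    moreover have "B j * B j > 0" using Bpos by simp
    ultimately have "log q (B j * B j) \<le> log q (B (j - 1) * B (j + 1))"
      using q1 by (simp only: log_le_cancel_iff)
    moreover have "log q (B j * B j) = 2 * g j" unfolding g_def
      using log_mult[of q "B j" "B j"] Bpos[of j] q1 by simp
    moreover have "log q (B (j - 1) * B (j + 1)) = g (j - 1) + g (j + 1)" unfolding g_def
      using log_mult[of q "B (j - 1)" "B (j + 1)"] Bpos[of "j - 1"] Bpos[of "j + 1"] q1 by simp
    ultimately show ?thesis by simp
  qed
  have lcb: "real N * g s \<le> real s * g N" if "s \<le> N" for s
    using lc_bound[of g, OF g0 cv that] by blast
  have claim: "k \<le> n \<Longrightarrow> \<exists>U. U \<subseteq> {1..n} \<and> k \<le> card U \<and> card U \<le> k + N - 1 \<and>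
      real N * log q (card (proj C U)) \<le> real (card U) * g N" for k
  proof (induction k)
    case 0
    have "proj C {} = {\<lambda>_. undefined}" unfolding proj_def using c01(1) by (auto simp: restrict_def intro!: image_eqI[of _ _ c0])
    then show ?case by (intro exI[of _ "{}"]) simp
  next
    case (Suc k)
    then obtain U where U: "U \<subseteq> {1..n}" "k \<le> card U" "card U \<le> k + N - 1"
      "real N * log q (card (proj C U)) \<le> real (card U) * g N" by auto
    show ?case
    proof (cases "Suc k \<le> card U")
      case True then show ?thesis using U N2 by (intro exI[of _ U]) auto
    next
      case False
      then have cU: "card U = k" using U(2) by simp
      have "U \<noteq> {1..n}" using cU Suc.prems by auto
      then obtain i where i: "i \<in> {1..n}" "i \<notin> U" using U(1) by blast
      obtain R where R: "R \<subseteq> {1..n}" "i \<in> R" "card R \<le> r + \<rho> - 1" "min_dist_ge R (proj C R) \<rho>"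
        using loc i(1) unfolding has_locality_def by blast
      have finU: "finite U" using U(1) finite_subset by blast
      have finR: "finite R" using R(1) finite_subset by blast
      have UR: "U \<union> R = U \<union> (R - U)" by auto
      have cUR: "card (U \<union> R) = card U + card (R - U)"
        unfolding UR by (rule card_Un_disjoint) (use finU finR in auto)
      have "R - U \<noteq> {}" using i R(2) by blast
      then have s1: "card (R - U) \<ge> 1" using finR by (simp add: Suc_le_eq card_gt_0_iff)
      have sN: "card (R - U) \<le> N" using R(3) card_mono[OF finR, of "R - U"] unfolding N_def by auto
      have sb: "real (card (proj C (U \<union> R))) \<le> real (card (proj C U)) * B (card (R - U))"
        by (rule step_bound[OF CQ assms(2) R(1) R(4) B_bound])
      have pne: "proj C V \<noteq> {}" for V unfolding proj_def using c01(1) by auto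
      have pfin: "finite (proj C V)" for V unfolding proj_def using finC by simp
      have pos1: "real (card (proj C V)) > 0" for V using pne[of V] pfin[of V] by (simp add: card_gt_0_iff)
      have "log q (card (proj C (U \<union> R))) \<le> log q (real (card (proj C U)) * B (card (R - U)))"
        using sb pos1 q1 by (subst log_le_cancel_iff) (auto intro: mult_pos_pos Bpos)
      also have "\<dots> = log q (card (proj C U)) + g (card (R - U))"
        unfolding g_def using log_mult[of q "real (card (proj C U))" "B (card (R - U))"] pos1[of U] Bpos[of "card (R - U)"] q1 by simp
      finally have "real N * log q (card (proj C (U \<union> R))) \<le> real N * (log q (card (proj C U)) + g (card (R - U)))"
        by (rule mult_left_mono) simp
      also have "\<dots> = real N * log q (card (proj C U)) + real N * g (card (R - U))"
        by (simp add: distrib_left)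
      also have "\<dots> \<le> real (card U) * g N + real (card (R - U)) * g N"
        using U(4) lcb[OF sN] by linarith
      also have "\<dots> = real (card (U \<union> R)) * g N" unfolding cUR by (simp add: algebra_simps)
      finally have L: "real N * log q (card (proj C (U \<union> R))) \<le> real (card (U \<union> R)) * g N" .
      show ?thesis
      proof (intro exI[of _ "U \<union> R"] conjI)
        show "U \<union> R \<subseteq> {1..n}" using U(1) R(1) by blast
        show "Suc k \<le> card (U \<union> R)" using cUR cU s1 by linarith
        show "card (U \<union> R) \<le> Suc k + N - 1" using cUR cU sN by linarith
        show "real N * log q (card (proj C (U \<union> R))) \<le> real (card (U \<union> R)) * g N" by (rule L)
      qed
    qed
  qed
  have kn: "n - d + 1 \<le> n" using dn assms(6) by simp
  obtain U where U: "U \<subseteq> {1..n}" "n - d + 1 \<le> card U" "card U \<le> n - d + 1 + N - 1"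
      "real N * log q (card (proj C U)) \<le> real (card U) * g N"
    using claim[OF kn] by blast
  have inj: "inj_on (\<lambda>c. restrict c U) C"
  proof
    fix c c' assume cc: "c \<in> C" "c' \<in> C" "restrict c U = restrict c' U"
    show "c = c'"
    proof (rule ccontr)
      assume ne: "c \<noteq> c'"
      then have "d \<le> hamming {1..n} c c'" using dist cc unfolding min_dist_eq_def min_dist_ge_def by blast
      also have "hamming {1..n} c c' \<le> card ({1..n} - U)"
      proof (unfold hamming_def, rule card_mono)
        show "{i \<in> {1..n}. c i \<noteq> c' i} \<subseteq> {1..n} - U"
        proof
          fix i assume i: "i \<in> {i \<in> {1..n}. c i \<noteq> c' i}"
          have "i \<notin> U"
          proof
            assume "i \<in> U"
            then have "restrict c U i = c i" "restrict c' U i = c' i" by auto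
            then show False using cc(3) i by simp
          qed
          then show "i \<in> {1..n} - U" using i by blast
        qed
      qed simp
      also have "\<dots> = n - card U" using U(1) by (simp add: card_Diff_subset finite_subset)
      finally show False using U(2) dn assms(6) by linarith
    qed
  qed
  have cardC: "card (proj C U) = card C" unfolding proj_def using card_image[OF inj] .
  have Ub: "real (card U) \<le> real n - real d + real N" using U(3) dn N2 by linarith
  have "real N * log q (card C) \<le> (real n - real d + real N) * g N"
  proof -
    have "real (card U) * g N \<le> (real n - real d + real N) * g N" by (rule mult_right_mono[OF Ub gnn])
    then show ?thesis using U(4) unfolding cardC by linarith
  qed
  then have "log q (card C) \<le> ((real n - real d + real N) / real N) * g N"
    using N2 by (simp add: field_simps)
  also have "\<dots> \<le> real_of_int (\<lceil>(real n - (real d - 1)) / real N\<rceil> + 1) * g N"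
  proof (rule mult_right_mono[OF _ gnn])
    have "(real n - real d + real N) / real N = (real n - real d) / real N + 1"
      using N2 by (simp add: field_simps)
    also have "(real n - real d) / real N \<le> (real n - (real d - 1)) / real N"
      using N2 by (intro divide_right_mono) auto
    also have "\<dots> \<le> real_of_int \<lceil>(real n - (real d - 1)) / real N\<rceil>" by (rule le_of_int_ceiling)
    finally show "(real n - real d + real N) / real N \<le> real_of_int (\<lceil>(real n - (real d - 1)) / real N\<rceil> + 1)"
      by simp
  qed
  finally show ?thesis unfolding g_def N_def .
qed

end
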